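(* Let $n\ge3$ and let $\mathcal D_n$ be a minimal DFA with state set $Q_n=\{0,\dots,n-1\}$ and initial state $0$ recognizing a left ideal, with transition semigroup $T_n$. If every chain of states of $\mathcal D_n$ strictly ordered by $\prec$ has at most $2$ elements (i.e., a maximal-length such chain has length $2$), then $|T_n|\le n^{n-1}+n-1$ and $T_n$ is a subsemigroup of $S_n$.
   Context: A left ideal is a nonempty $L$ with $L=\Sigma^*L$. For a state $q$, $K_q$ is the language accepted from $q$; $p\prec q$ means $K_p\subsetneq K_q$. The transition semigroup is the set of state transformations induced by nonempty words. Notation: $(p\to q)$ maps $p$ to $q$ and fixes other states; $(Q_n\to q)$ is constant; $(p_0,\dots,p_{k-1})$ is a cyclic permutation fixing other states. $S_n$ is the transition semigroup of the DFA with states $Q_n$, initial $0$, final $\{n-1\}$, alphabet $\{a,b,c,d,e\}$, with $a\colon(1,2,\dots,n-1)$, $b\colon(1,2)$, $c\colon(n-1\to1)$, $d\colon(n-1\to0)$, $e\colon(Q_n\to1)$. *)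

theory Defs
  imports Main
begin

definition dfa_wf :: "nat \<Rightarrow> ('a \<Rightarrow> nat \<Rightarrow> nat) \<Rightarrow> nat set \<Rightarrow> bool" where
  "dfa_wf n \<delta> F \<longleftrightarrow> (\<forall>a q. q < n \<longrightarrow> \<delta> a q < n) \<and> F \<subseteq> {..<n}"

definition lang_from :: "('a \<Rightarrow> nat \<Rightarrow> nat) \<Rightarrow> nat set \<Rightarrow> nat \<Rightarrow> 'a list set" where
  "lang_from \<delta> F q = {w. fold \<delta> w q \<in> F}"

definition dfa_minimal :: "nat \<Rightarrow> ('a \<Rightarrow> nat \<Rightarrow> nat) \<Rightarrow> nat set \<Rightarrow> bool" where
  "dfa_minimal n \<delta> F \<longleftrightarrow>
     (\<forall>q<n. \<exists>w. fold \<delta> w 0 = q) \<and>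
     (\<forall>p<n. \<forall>q<n. p \<noteq> q \<longrightarrow> lang_from \<delta> F p \<noteq> lang_from \<delta> F q)"

definition left_ideal :: "'a list set \<Rightarrow> bool" where
  "left_ideal L \<longleftrightarrow> L \<noteq> {} \<and> L = {u @ v | u v. v \<in> L}"

definition state_prec :: "('a \<Rightarrow> nat \<Rightarrow> nat) \<Rightarrow> nat set \<Rightarrow> nat \<Rightarrow> nat \<Rightarrow> bool" where
  "state_prec \<delta> F p q \<longleftrightarrow> lang_from \<delta> F p \<subset> lang_from \<delta> F q"

definition word_trans :: "nat \<Rightarrow> ('a \<Rightarrow> nat \<Rightarrow> nat) \<Rightarrow> 'a list \<Rightarrow> nat \<Rightarrow> nat" where
  "word_trans n \<delta> w = (\<lambda>q. if q < n then fold \<delta> w q else q)"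

definition trans_semigroup :: "nat \<Rightarrow> ('a \<Rightarrow> nat \<Rightarrow> nat) \<Rightarrow> (nat \<Rightarrow> nat) set" where
  "trans_semigroup n \<delta> = {word_trans n \<delta> w | w. w \<noteq> []}"

datatype letter5 = La | Lb | Lc | Ld | Le

text \<open>The witness DFA: a:(1,2,...,n-1), b:(1,2), c:(n-1 -> 1), d:(n-1 -> 0), e:(Q_n -> 1).\<close>
fun delta_S :: "nat \<Rightarrow> letter5 \<Rightarrow> nat \<Rightarrow> nat" where
  "delta_S n La q = (if 1 \<le> q \<and> q < n - 1 then q + 1 else if q = n - 1 then 1 else q)"
| "delta_S n Lb q = (if q = 1 then 2 else if q = 2 then 1 else q)"
| "delta_S n Lc q = (if q = n - 1 then 1 else q)"
| "delta_S n Ld q = (if q = n - 1 then 0 else q)"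
| "delta_S n Le q = (if q < n then 1 else q)"

definition S_sg :: "nat \<Rightarrow> (nat \<Rightarrow> nat) set" where
  "S_sg n = trans_semigroup n (delta_S n)"

end

theory Submission
  imports Defs "HOL-Library.FuncSet"
begin


definition swp :: "nat \<Rightarrow> nat \<Rightarrow> nat \<Rightarrow> nat" where
  "swp i j = (\<lambda>r. if r = i then j else if r = j then i else r)"
definition upd :: "nat \<Rightarrow> nat \<Rightarrow> nat \<Rightarrow> nat" where
  "upd p x = (\<lambda>r. if r = p then x else r)"
definition Mn :: "nat \<Rightarrow> (nat \<Rightarrow> nat) set" where
  "Mn n = {word_trans n (delta_S n) w | w. True}"
definition Af :: "nat \<Rightarrow> nat \<Rightarrow> nat" where
  "Af n q = (if 1 \<le> q \<and> q < n - 1 then q + 1 else if q = n - 1 then 1 else q)"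

lemma fold_lt: "(\<forall>a q. q < n \<longrightarrow> \<delta> a q < n) \<Longrightarrow> p < n \<Longrightarrow> fold \<delta> w p < n"
  by (induction w arbitrary: p) auto

lemma word_trans_append:
  assumes "\<forall>a q. q<n \<longrightarrow> \<delta> a q < n"
  shows "word_trans n \<delta> (w @ v) = word_trans n \<delta> v \<circ> word_trans n \<delta> w"
  unfolding word_trans_def using fold_lt[OF assms] by (auto simp: fun_eq_iff)

lemma dS_lt: "n \<ge> 3 \<Longrightarrow> \<forall>a q. q < n \<longrightarrow> delta_S n a q < n"
  apply (intro allI impI)
  subgoal for a q by (cases a) auto
  done

lemma Mn_comp: assumes "n \<ge> 3" "f \<in> Mn n" "g \<in> Mn n" shows "g \<circ> f \<in> Mn n"
proof -
  obtain w where w: "f = word_trans n (delta_S n) w" using assms(2) unfolding Mn_def by auto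
  obtain v where v: "g = word_trans n (delta_S n) v" using assms(3) unfolding Mn_def by auto
  have "g \<circ> f = word_trans n (delta_S n) (w @ v)" using word_trans_append[OF dS_lt[OF assms(1)]] w v by simp
  then show ?thesis unfolding Mn_def by blast
qed

lemma Mn_id: "id \<in> Mn n"
  unfolding Mn_def word_trans_def by (rule CollectI, rule exI[of _ "[]"]) (auto simp: fun_eq_iff)

lemma Mn_S: assumes "n \<ge> 3" "f \<in> Mn n" shows "f \<in> S_sg n"
proof -
  obtain w where f: "f = word_trans n (delta_S n) w" using assms unfolding Mn_def by auto
  show ?thesis
  proof (cases "w = []")
    case True
    have "f = word_trans n (delta_S n) [Lb, Lb]"
      using True f assms unfolding word_trans_def by (auto simp: fun_eq_iff)
    then show ?thesis unfolding S_sg_def trans_semigroup_def by blast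
  next
    case False
    then show ?thesis using f unfolding S_sg_def trans_semigroup_def by blast
  qed
qed

lemma let_A: "n \<ge> 3 \<Longrightarrow> Af n \<in> Mn n"
proof -
  assume n: "n \<ge> 3"
  have "Af n = word_trans n (delta_S n) [La]"
  proof
    fix q show "Af n q = word_trans n (delta_S n) [La] q"
      using n unfolding word_trans_def Af_def by auto
  qed
  then show ?thesis unfolding Mn_def by blast
qed

lemma let_B: "n \<ge> 3 \<Longrightarrow> swp 1 2 \<in> Mn n"
proof -
  assume n: "n \<ge> 3"
  have "swp 1 2 = word_trans n (delta_S n) [Lb]"
  proof
    fix q show "swp 1 2 q = word_trans n (delta_S n) [Lb] q"
      using n unfolding word_trans_def swp_def by simp
  qed
  then show ?thesis unfolding Mn_def by blast
qed

lemma let_C: "n \<ge> 3 \<Longrightarrow> upd (n-1) 1 \<in> Mn n"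
proof -
  assume n: "n \<ge> 3"
  have "upd (n-1) 1 = word_trans n (delta_S n) [Lc]"
  proof
    fix q show "upd (n-1) 1 q = word_trans n (delta_S n) [Lc] q"
      using n unfolding word_trans_def upd_def by simp
  qed
  then show ?thesis unfolding Mn_def by blast
qed

lemma let_D: "n \<ge> 3 \<Longrightarrow> upd (n-1) 0 \<in> Mn n"
proof -
  assume n: "n \<ge> 3"
  have "upd (n-1) 0 = word_trans n (delta_S n) [Ld]"
  proof
    fix q show "upd (n-1) 0 q = word_trans n (delta_S n) [Ld] q"
      using n unfolding word_trans_def upd_def by simp
  qed
  then show ?thesis unfolding Mn_def by blast
qed

lemma let_E: "n \<ge> 3 \<Longrightarrow> (\<lambda>q. if q < n then 1 else q) \<in> Mn n"
proof -
  assume n: "n \<ge> 3"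
  have "(\<lambda>q. if q < n then 1 else q) = word_trans n (delta_S n) [Le]"
  proof
    fix q show "(\<lambda>q. if q < n then 1 else q) q = word_trans n (delta_S n) [Le] q"
      using n unfolding word_trans_def  by simp
  qed
  then show ?thesis unfolding Mn_def by blast
qed

lemma Apow: "n \<ge> 3 \<Longrightarrow> 1 \<le> q \<Longrightarrow> q \<le> n - 1 \<Longrightarrow> (Af n ^^ k) q = (q - 1 + k) mod (n - 1) + 1"
proof (induction k)
  case 0
  then show ?case by simp
next
  case (Suc k)
  define m where "m = (q - 1 + k) mod (n - 1)"
  have m: "m < n - 1" using Suc.prems unfolding m_def by simp
  have "(Af n ^^ Suc k) q = Af n (m + 1)" using Suc by (simp add: m_def)
  also have "\<dots> = Suc (q - 1 + k) mod (n - 1) + 1"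
    using m unfolding m_def Af_def by (auto simp: mod_Suc)
  finally show ?case by simp
qed

lemma Apow_fix: "q = 0 \<or> q \<ge> n \<Longrightarrow> n \<ge> 3 \<Longrightarrow> (Af n ^^ k) q = q"
  by (induction k) (auto simp: Af_def)

lemma Apow_id: assumes "n \<ge> 3" shows "Af n ^^ (n - 1) = id"
proof
  fix q
  show "(Af n ^^ (n - 1)) q = id q"
  proof (cases "q = 0 \<or> q \<ge> n")
    case True then show ?thesis using Apow_fix assms by simp
  next
    case False
    then have "1 \<le> q" "q \<le> n - 1" by auto
    then have "(Af n ^^ (n - 1)) q = (q - 1 + (n - 1)) mod (n - 1) + 1" using Apow assms by blast
    also have "\<dots> = (q - 1) mod (n - 1) + 1" by (simp only: mod_add_self2)
    also have "\<dots> = q" using \<open>1 \<le> q\<close> \<open>q \<le> n - 1\<close> assms by simp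
    finally show ?thesis by simp
  qed
qed

lemma Apow_Mn: "n \<ge> 3 \<Longrightarrow> Af n ^^ k \<in> Mn n"
  by (induction k) (auto simp: Mn_id intro: Mn_comp let_A)

lemma A_inv: assumes "n \<ge> 3" shows "Af n \<circ> Af n ^^ (n - 2) = id" "Af n ^^ (n - 2) \<circ> Af n = id"
proof -
  have e: "n - 1 = Suc (n - 2)" using assms by simp
  show "Af n \<circ> Af n ^^ (n - 2) = id" using Apow_id[OF assms] unfolding e by simp
  show "Af n ^^ (n - 2) \<circ> Af n = id" using Apow_id[OF assms] unfolding e funpow_Suc_right by simp
qed

lemma conj_swp: assumes "\<sigma> \<circ> \<sigma>' = id" "\<sigma>' \<circ> \<sigma> = id"
  shows "\<sigma> \<circ> swp i j \<circ> \<sigma>' = swp (\<sigma> i) (\<sigma> j)"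
proof
  fix r
  have a: "\<sigma> (\<sigma>' r) = r" using assms(1) by (metis comp_apply id_apply)
  have b: "\<And>a. \<sigma>' (\<sigma> a) = a" using assms(2) by (metis comp_apply id_apply)
  have inj: "\<And>a b. (\<sigma> a = \<sigma> b) = (a = b)" by (metis b)
  define y where "y = \<sigma>' r"
  have r: "r = \<sigma> y" using a y_def by simp
  show "(\<sigma> \<circ> swp i j \<circ> \<sigma>') r = swp (\<sigma> i) (\<sigma> j) r"
    unfolding swp_def r comp_apply b using inj by auto
qed

lemma conj_upd: assumes "\<sigma> \<circ> \<sigma>' = id" "\<sigma>' \<circ> \<sigma> = id"
  shows "\<sigma> \<circ> upd p x \<circ> \<sigma>' = upd (\<sigma> p) (\<sigma> x)"
proof
  fix r
  have a: "\<sigma> (\<sigma>' r) = r" using assms(1) by (metis comp_apply id_apply)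
  have b: "\<And>a. \<sigma>' (\<sigma> a) = a" using assms(2) by (metis comp_apply id_apply)
  have inj: "\<And>a b. (\<sigma> a = \<sigma> b) = (a = b)" by (metis b)
  define y where "y = \<sigma>' r"
  have r: "r = \<sigma> y" using a y_def by simp
  show "(\<sigma> \<circ> upd p x \<circ> \<sigma>') r = upd (\<sigma> p) (\<sigma> x) r"
    unfolding upd_def r comp_apply b using inj by auto
qed

lemma conj_Mn: assumes "n \<ge> 3" "s \<in> Mn n" "u \<in> Mn n" shows "s \<circ> u \<circ> s \<in> Mn n"
proof -
  have "s \<circ> u \<in> Mn n" using Mn_comp[OF assms(1) assms(3) assms(2)] .
  then show ?thesis using Mn_comp[OF assms(1) assms(2)] by blast
qed

lemma conj2_Mn: assumes "n \<ge> 3" "s \<in> Mn n" "u \<in> Mn n" "s' \<in> Mn n" shows "s \<circ> u \<circ> s' \<in> Mn n"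
proof -
  have "s \<circ> u \<in> Mn n" using Mn_comp[OF assms(1) assms(3) assms(2)] .
  then show ?thesis using Mn_comp[OF assms(1) assms(4)] by blast
qed

lemma swp_inv: "swp i j \<circ> swp i j = id"
  by (auto simp: swp_def fun_eq_iff)

lemma adj: "n \<ge> 3 \<Longrightarrow> k + 2 \<le> n - 1 \<Longrightarrow> swp (k+1) (k+2) \<in> Mn n"
proof (induction k)
  case 0
  then show ?case using let_B[of n] by (simp add: numeral_2_eq_2)
next
  case (Suc k)
  have "Af n \<circ> swp (k+1) (k+2) \<circ> Af n ^^ (n - 2) = swp (Af n (k+1)) (Af n (k+2))"
    using conj_swp A_inv Suc.prems by blast
  also have "\<dots> = swp (Suc k + 1) (Suc k + 2)" using Suc.prems by (simp add: Af_def)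
  finally have eq: "Af n \<circ> swp (k+1) (k+2) \<circ> Af n ^^ (n - 2) = swp (Suc k + 1) (Suc k + 2)" .
  have "swp (k+1) (k+2) \<in> Mn n" using Suc by simp
  from conj2_Mn[OF Suc.prems(1) let_A[OF Suc.prems(1)] this Apow_Mn[of n "n-2", OF Suc.prems(1)]]
  show ?case unfolding eq .
qed

lemma swp_lt: "n \<ge> 3 \<Longrightarrow> 1 \<le> i \<Longrightarrow> i < j \<Longrightarrow> j \<le> n - 1 \<Longrightarrow> swp i j \<in> Mn n"
proof (induction j)
  case 0 then show ?case by simp
next
  case (Suc j)
  show ?case
  proof (cases "i = j")
    case True
    then show ?thesis using adj[of n "i - 1"] Suc.prems by simp
  next
    case False
    then have ij: "i < j" using Suc.prems by simp
    have s: "swp j (j+1) \<in> Mn n" using adj[of n "j - 1"] Suc.prems ij by simp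
    have "swp j (j+1) \<circ> swp i j \<circ> swp j (j+1) = swp (swp j (j+1) i) (swp j (j+1) j)"
      using conj_swp swp_inv by blast
    also have "\<dots> = swp i (Suc j)" using ij by (simp add: swp_def)
    finally have eq: "swp j (j+1) \<circ> swp i j \<circ> swp j (j+1) = swp i (Suc j)" .
    have "swp i j \<in> Mn n" using Suc ij by simp
    from conj_Mn[OF Suc.prems(1) s this] show ?thesis unfolding eq .
  qed
qed

lemma swp_sym: "swp i j = swp j i" by (auto simp: swp_def fun_eq_iff)

lemma swp_in: "n \<ge> 3 \<Longrightarrow> 1 \<le> i \<Longrightarrow> 1 \<le> j \<Longrightarrow> i < n \<Longrightarrow> j < n \<Longrightarrow> swp i j \<in> Mn n"
proof -
  assume a: "n \<ge> 3" "1 \<le> i" "1 \<le> j" "i < n" "j < n"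
  consider "i < j" | "i = j" | "j < i" by arith
  then show ?thesis
  proof cases
    case 1 then show ?thesis using swp_lt a by simp
  next
    case 2 then have "swp i j = id" by (auto simp: swp_def fun_eq_iff)
    then show ?thesis using Mn_id by simp
  next
    case 3 then show ?thesis using swp_lt[of n j i] a swp_sym by simp
  qed
qed

lemma upd_last: "n \<ge> 3 \<Longrightarrow> 1 \<le> x \<Longrightarrow> x < n - 1 \<Longrightarrow> upd (n-1) x \<in> Mn n"
proof -
  assume a: "n \<ge> 3" "1 \<le> x" "x < n - 1"
  show ?thesis
  proof (cases "x = 1")
    case True then show ?thesis using let_C a by simp
  next
    case False
    have "swp 1 x \<circ> upd (n-1) 1 \<circ> swp 1 x = upd (swp 1 x (n-1)) (swp 1 x 1)"
      using conj_upd swp_inv by blast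
    also have "\<dots> = upd (n-1) x" using a False by (simp add: swp_def)
    finally have eq: "swp 1 x \<circ> upd (n-1) 1 \<circ> swp 1 x = upd (n-1) x" .
    have "swp 1 x \<in> Mn n" using swp_in[of n 1 x] a by simp
    from conj_Mn[OF a(1) this let_C[OF a(1)]] show ?thesis unfolding eq .
  qed
qed

lemma upd_in: assumes "n \<ge> 3" "1 \<le> p" "p < n" "x < n" shows "upd p x \<in> Mn n"
proof (cases "x = p")
  case True
  then have "upd p x = id" by (auto simp: upd_def fun_eq_iff)
  then show ?thesis using Mn_id by simp
next
  case xp: False
  have sw: "swp p (n-1) \<in> Mn n" using swp_in[of n p "n-1"] assms by simp
  show ?thesis
  proof (cases "x = 0")
    case True
    show ?thesis
    proof (cases "p = n - 1")
      case True then show ?thesis using let_D assms \<open>x = 0\<close> by simp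
    next
      case False
      have "swp p (n-1) \<circ> upd (n-1) 0 \<circ> swp p (n-1) = upd (swp p (n-1) (n-1)) (swp p (n-1) 0)"
        using conj_upd swp_inv by blast
      also have "\<dots> = upd p x" using assms False True by (simp add: swp_def)
      finally have eq: "swp p (n-1) \<circ> upd (n-1) 0 \<circ> swp p (n-1) = upd p x" .
      from conj_Mn[OF assms(1) sw let_D[OF assms(1)]] show ?thesis unfolding eq .
    qed
  next
    case x0: False
    show ?thesis
    proof (cases "p = n - 1")
      case True then show ?thesis using upd_last[of n x] assms x0 xp by simp
    next
      case pn: False
      show ?thesis
      proof (cases "x = n - 1")
        case True
        have "swp p (n-1) \<circ> upd (n-1) p \<circ> swp p (n-1) = upd (swp p (n-1) (n-1)) (swp p (n-1) p)"
          using conj_upd swp_inv by blast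
        also have "\<dots> = upd p x" using True by (simp add: swp_def)
        finally have eq: "swp p (n-1) \<circ> upd (n-1) p \<circ> swp p (n-1) = upd p x" .
        have "upd (n-1) p \<in> Mn n" using upd_last[of n p] assms pn by simp
        from conj_Mn[OF assms(1) sw this] show ?thesis unfolding eq .
      next
        case False
        have "swp p (n-1) \<circ> upd (n-1) x \<circ> swp p (n-1) = upd (swp p (n-1) (n-1)) (swp p (n-1) x)"
          using conj_upd swp_inv by blast
        also have "\<dots> = upd p x" using False xp by (simp add: swp_def)
        finally have eq: "swp p (n-1) \<circ> upd (n-1) x \<circ> swp p (n-1) = upd p x" .
        have "upd (n-1) x \<in> Mn n" using upd_last[of n x] assms x0 False by simp
        from conj_Mn[OF assms(1) sw this] show ?thesis unfolding eq .
      qed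
    qed
  qed
qed



definition goodf :: "nat \<Rightarrow> (nat \<Rightarrow> nat) \<Rightarrow> bool" where
  "goodf n t \<longleftrightarrow> (\<forall>q. n \<le> q \<longrightarrow> t q = q) \<and> t 0 = 0 \<and> (\<forall>q<n. t q < n)"

lemma good_in: "n \<ge> 3 \<Longrightarrow> goodf n t \<Longrightarrow> t \<in> Mn n"
proof (induction "card {p \<in> {1..<n}. t p \<noteq> p}" arbitrary: t rule: less_induct)
  case less
  note g = less.prems(2)[unfolded goodf_def]
  show ?case
  proof (cases "{p \<in> {1..<n}. t p \<noteq> p} = {}")
    case True
    have "t = id"
    proof
      fix q show "t q = id q" using True g by (cases "q = 0 \<or> q \<ge> n") auto
    qed
    then show ?thesis using Mn_id by simp
  next
    case False
    then obtain p where p: "1 \<le> p" "p < n" "t p \<noteq> p" by auto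
    show ?thesis
    proof (cases "\<exists>x. x \<noteq> p \<and> x < n \<and> t x = t p")
      case True
      then obtain x where x: "x \<noteq> p" "x < n" "t x = t p" by auto
      define t' where "t' = t(p := p)"
      have gt': "goodf n t'" using g p unfolding goodf_def t'_def by auto
      have sub: "{q \<in> {1..<n}. t' q \<noteq> q} \<subset> {q \<in> {1..<n}. t q \<noteq> q}"
        using p unfolding t'_def by auto
      have "card {q \<in> {1..<n}. t' q \<noteq> q} < card {q \<in> {1..<n}. t q \<noteq> q}"
        by (rule psubset_card_mono[OF _ sub]) auto
      then have "t' \<in> Mn n" using less gt' by blast
      moreover have "t = t' \<circ> upd p x" using x unfolding t'_def upd_def by (auto simp: fun_eq_iff)
      moreover have "upd p x \<in> Mn n" using upd_in[of n p x] p x less.prems by simp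
      ultimately have "t' \<circ> upd p x \<in> Mn n" using Mn_comp less.prems(1) by blast
      then show ?thesis using \<open>t = t' \<circ> upd p x\<close> by simp
    next
      case nox: False
      define q where "q = t p"
      have q0: "q \<noteq> 0" using nox g p unfolding q_def by (metis)
      have qn: "q < n" using g p q_def by auto
      have qp: "q \<noteq> p" using p q_def by auto
      have tq: "t q \<noteq> q" using nox qn qp q_def by blast
      define t'' where "t'' = t \<circ> swp p q"
      have gt'': "goodf n t''" using g p q0 qn unfolding goodf_def t''_def swp_def by auto
      have sub: "{r \<in> {1..<n}. t'' r \<noteq> r} \<subset> {r \<in> {1..<n}. t r \<noteq> r}"
      proof
        show "{r \<in> {1..<n}. t'' r \<noteq> r} \<subseteq> {r \<in> {1..<n}. t r \<noteq> r}"
          using p q_def unfolding t''_def swp_def by auto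
        have "q \<in> {r \<in> {1..<n}. t r \<noteq> r}" using q0 qn tq by auto
        moreover have "q \<notin> {r \<in> {1..<n}. t'' r \<noteq> r}" using qp unfolding t''_def swp_def q_def by auto
        ultimately show "{r \<in> {1..<n}. t'' r \<noteq> r} \<noteq> {r \<in> {1..<n}. t r \<noteq> r}" by blast
      qed
      have "card {r \<in> {1..<n}. t'' r \<noteq> r} < card {r \<in> {1..<n}. t r \<noteq> r}"
        by (rule psubset_card_mono[OF _ sub]) auto
      then have "t'' \<in> Mn n" using less gt'' by blast
      moreover have "t = t'' \<circ> swp p q" unfolding t''_def using swp_inv by (simp add: comp_assoc)
      moreover have "swp p q \<in> Mn n" using swp_in[of n p q] p q0 qn less.prems by simp
      ultimately have "t'' \<circ> swp p q \<in> Mn n" using Mn_comp less.prems(1) by blast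
      then show ?thesis using \<open>t = t'' \<circ> swp p q\<close> by simp
    qed
  qed
qed



lemma good_card: "finite {t. goodf n t} \<and> card {t. goodf n t} \<le> n ^ (n - 1)"
proof -
  define ext where "ext = (\<lambda>f::nat\<Rightarrow>nat. \<lambda>q. if q \<in> {1..<n} then f q else q)"
  have sub: "{t. goodf n t} \<subseteq> ext ` (PiE {1..<n} (\<lambda>_. {..<n}))"
  proof
    fix t assume "t \<in> {t. goodf n t}"
    then have g: "goodf n t" by simp
    have "t = ext (restrict t {1..<n})"
    proof
      fix q show "t q = ext (restrict t {1..<n}) q"
        using g unfolding ext_def goodf_def by (cases "q = 0") auto
    qed
    moreover have "restrict t {1..<n} \<in> PiE {1..<n} (\<lambda>_. {..<n})" using g unfolding goodf_def by auto
    ultimately show "t \<in> ext ` (PiE {1..<n} (\<lambda>_. {..<n}))" by blast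
  qed
  have fin: "finite (PiE {1..<n} (\<lambda>_. {..<n}))" by (rule finite_PiE) auto
  have "card (PiE {1..<n} (\<lambda>_. {..<n})) = n ^ (n - 1)" by (simp add: card_PiE)
  moreover have "card {t. goodf n t} \<le> card (ext ` (PiE {1..<n} (\<lambda>_. {..<n})))"
    by (rule card_mono[OF finite_imageI[OF fin] sub])
  moreover have "card (ext ` (PiE {1..<n} (\<lambda>_. {..<n}))) \<le> card (PiE {1..<n} (\<lambda>_. {..<n}))"
    by (rule card_image_le[OF fin])
  moreover have "finite {t. goodf n t}" by (rule finite_subset[OF sub finite_imageI[OF fin]])
  ultimately show ?thesis by linarith
qed


theorem lemma4:
  fixes n :: nat and \<delta> :: "'a::finite \<Rightarrow> nat \<Rightarrow> nat" and F :: "nat set"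
  assumes "n \<ge> 3"
    and "dfa_wf n \<delta> F"
    and "dfa_minimal n \<delta> F"
    and "left_ideal (lang_from \<delta> F 0)"
    and "\<forall>xs. set xs \<subseteq> {..<n} \<and> sorted_wrt (state_prec \<delta> F) xs \<longrightarrow> length xs \<le> 2"
  shows "card (trans_semigroup n \<delta>) \<le> n ^ (n - 1) + n - 1
         \<and> trans_semigroup n \<delta> \<subseteq> S_sg n"
proof -
  note n3 = assms(1)
  have cl: "\<forall>a q. q < n \<longrightarrow> \<delta> a q < n" using assms(2) unfolding dfa_wf_def by blast
  define K where "K = lang_from \<delta> F"
  have K0: "K 0 \<subseteq> K p" if pn: "p < n" for p
  proof
    fix v assume v: "v \<in> K 0"
    obtain u where u: "fold \<delta> u 0 = p" using assms(3) pn unfolding dfa_minimal_def by blast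
    have "u @ v \<in> {u @ v | u v. v \<in> lang_from \<delta> F 0}" using v unfolding K_def by blast
    then have "u @ v \<in> lang_from \<delta> F 0" using assms(4) unfolding left_ideal_def by blast
    then show "v \<in> K p" using u unfolding K_def lang_from_def by simp
  qed
  have mono: "K (fold \<delta> w p) \<subseteq> K (fold \<delta> w r)" if pr: "K p \<subseteq> K r" for w p r
  proof
    fix v assume "v \<in> K (fold \<delta> w p)"
    then have "w @ v \<in> K p" by (simp add: K_def lang_from_def)
    then have "w @ v \<in> K r" using pr by blast
    then show "v \<in> K (fold \<delta> w r)" by (simp add: K_def lang_from_def)
  qed
  have chainlem: "r = q" if "q \<noteq> 0" "q < n" "r < n" "K q \<subseteq> K r" for q r
  proof (rule ccontr)
    assume rq: "r \<noteq> q"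
    have "K q \<noteq> K r" using assms(3) that rq unfolding dfa_minimal_def K_def by blast
    then have p1: "state_prec \<delta> F q r" using that unfolding state_prec_def K_def by blast
    have "0 < n" using n3 by simp
    then have "K 0 \<noteq> K q" using assms(3) that unfolding dfa_minimal_def K_def by blast
    then have p2: "state_prec \<delta> F 0 q" using K0 that unfolding state_prec_def K_def by blast
    have p3: "state_prec \<delta> F 0 r" using p1 p2 unfolding state_prec_def by blast
    have "set [0, q, r] \<subseteq> {..<n}" using that n3 by auto
    moreover have "sorted_wrt (state_prec \<delta> F) [0, q, r]" using p1 p2 p3 by simp
    ultimately have "length [0, q, r] \<le> 2" using assms(5) by blast
    then show False by simp
  qed
  define cst where "cst = (\<lambda>c::nat. \<lambda>r::nat. if r < n then c else r)"
  have Tsub: "trans_semigroup n \<delta> \<subseteq> {t. goodf n t} \<union> cst ` {1..<n}"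
  proof
    fix t assume "t \<in> trans_semigroup n \<delta>"
    then obtain w where t: "t = word_trans n \<delta> w" unfolding trans_semigroup_def by blast
    define q where "q = fold \<delta> w 0"
    have qn: "q < n" using fold_lt[OF cl] n3 unfolding q_def by simp
    show "t \<in> {t. goodf n t} \<union> cst ` {1..<n}"
    proof (cases "q = 0")
      case True
      have "goodf n t" unfolding goodf_def t word_trans_def using True q_def fold_lt[OF cl] n3 by auto
      then show ?thesis by blast
    next
      case False
      have "t = cst q"
      proof
        fix r show "t r = cst q r"
        proof (cases "r < n")
          case True
          have "K q \<subseteq> K (fold \<delta> w r)" using mono[OF K0[OF True]] unfolding q_def by simp
          then have "fold \<delta> w r = q" using chainlem[OF False qn] fold_lt[OF cl True] by blast
          then show ?thesis using True unfolding t word_trans_def cst_def by simp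
        next
          case False then show ?thesis unfolding t word_trans_def cst_def by simp
        qed
      qed
      then show ?thesis using False qn by auto
    qed
  qed
  have Xsub: "{t. goodf n t} \<union> cst ` {1..<n} \<subseteq> S_sg n"
  proof
    fix t assume "t \<in> {t. goodf n t} \<union> cst ` {1..<n}"
    then consider "goodf n t" | c where "c \<in> {1..<n}" "t = cst c" by blast
    then show "t \<in> S_sg n"
    proof cases
      case 1 then show ?thesis using good_in Mn_S n3 by blast
    next
      case (2 c)
      have "t = upd 1 c \<circ> (\<lambda>q. if q < n then 1 else q)"
        using 2 unfolding cst_def upd_def by (auto simp: fun_eq_iff)
      moreover have "upd 1 c \<in> Mn n" using upd_in[of n 1 c] 2 n3 by simp
      ultimately have "t \<in> Mn n" using Mn_comp[OF n3 let_E[OF n3]] by simp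
      then show ?thesis using Mn_S n3 by blast
    qed
  qed
  have fX: "finite ({t. goodf n t} \<union> cst ` {1..<n})" using good_card by simp
  have "card (trans_semigroup n \<delta>) \<le> card ({t. goodf n t} \<union> cst ` {1..<n})"
    using card_mono[OF fX Tsub] .
  also have "\<dots> \<le> card {t. goodf n t} + card (cst ` {1..<n})" by (rule card_Un_le)
  also have "\<dots> \<le> n ^ (n - 1) + (n - 1)"
    using good_card[of n] card_image_le[of "{1..<n}" cst] by simp
  finally show ?thesis using Tsub Xsub n3 by auto
qed

end
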